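(* Let $(R,d)$ be a fusion algebra with set of irreducible objects $I$. For every finite, symmetric ($\bar X=X$), nonempty set $X\subseteq I$ there exists $C_X>0$ such that for every finite set $A\subseteq I$ we have $|\partial_X(A)|\le C_X|\partial^{\mathrm{inn}}_X(A)|$. In particular, if $X$ is moreover generating, then $\mathrm{F\o l}_X(R,d)\le C_X\,\mathrm{F\o l}^{\mathrm{inn}}_X(R,d)$.
   Context: A fusion algebra $(R,d)$ consists of a set $I$ with distinguished $e$ and involution $\alpha\mapsto\bar\alpha$, a unital ring structure on $R=\mathbb{Z}[I]$ with unit $e$ and $\xi\eta=\sum_\alpha N^\alpha_{\xi,\eta}\alpha$, $N^\alpha_{\xi,\eta}\in\mathbb{Z}_{\ge0}$ finitely many nonzero, the involution extending to a $\mathbb{Z}$-linear antimultiplicative involution, Frobenius reciprocity $N^\alpha_{\xi,\eta}=N^\xi_{\alpha,\bar\eta}=N^\eta_{\bar\xi,\alpha}$, and $\mathbb{Z}$-linear multiplicative $d:R\to\mathbb{R}$ with $d(\bar\alpha)=d(\alpha)\ge1$ on $I$. $\mathrm{supp}(r)$: elements of $I$ with nonzero coefficient in $r$. $|A|=\sum_{\alpha\in A}d(\alpha)^2$, $A^c=I\setminus A$. $\partial_X(A)=\{\alpha\in A:\exists x\in X,\ \mathrm{supp}(\alpha x)\not\subseteq A\}\cup\{\alpha\in A^c:\exists x\in X,\ \mathrm{supp}(\alpha x)\not\subseteq A^c\}$, $\partial^{\mathrm{inn}}_X(A)=\{\alpha\in A:\exists x\in X,\ \mathrm{supp}(\alpha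 x)\not\subseteq A\}$. A finite generating set is a finite $X$, $\bar X=X$, such that every $\alpha\in I$ lies in $\mathrm{supp}(x_1\cdots x_n)$ for some $x_i\in X$. $\mathrm{F\o l}_X(R,d)=\inf_A|\partial_XA|/|A|$ and $\mathrm{F\o l}^{\mathrm{inn}}_X(R,d)=\inf_A|\partial^{\mathrm{inn}}_XA|/|A|$ over nonempty finite $A\subseteq I$. *)

theory Defs
  imports Complex_Main
begin

text \<open>A fusion algebra on the index type 'a (the set I of irreducibles).
  N a x y is the fusion coefficient of a in the product x y (basis elements),
  e is the unit, bar the involution, d the dimension function on I.
  d extends Z-linearly to R = Z[I]; multiplicativity of d on R is equivalent to
  multiplicativity on products of basis elements.\<close>

definition supp :: "('a \<Rightarrow> 'a \<Rightarrow> 'a \<Rightarrow> nat) \<Rightarrow> 'a \<Rightarrow> 'a \<Rightarrow> 'a set" where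
  "supp N x y = {a. N a x y \<noteq> 0}"

definition fusion_algebra ::
  "('a \<Rightarrow> 'a \<Rightarrow> 'a \<Rightarrow> nat) \<Rightarrow> 'a \<Rightarrow> ('a \<Rightarrow> 'a) \<Rightarrow> ('a \<Rightarrow> real) \<Rightarrow> bool" where
  "fusion_algebra N e bar d \<longleftrightarrow>
     (\<forall>x y. finite (supp N x y)) \<and>
     (\<forall>x a. N a e x = (if a = x then 1 else 0) \<and> N a x e = (if a = x then 1 else 0)) \<and>
     (\<forall>x y z a. (\<Sum>b\<in>supp N x y. N b x y * N a b z) = (\<Sum>b\<in>supp N y z. N b y z * N a x b)) \<and>
     (\<forall>a. bar (bar a) = a) \<and>
     (\<forall>a x y. N a x y = N (bar a) (bar y) (bar x)) \<and>
     (\<forall>a x y. N a x y = N x a (bar y) \<and> N a x y = N y (bar x) a) \<and>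
     (\<forall>x y. (\<Sum>a\<in>supp N x y. real (N a x y) * d a) = d x * d y) \<and>
     (\<forall>a. d (bar a) = d a \<and> d a \<ge> 1)"

text \<open>Product of an element r of Z[I] (with nonnegative coefficients) by a basis element x.\<close>
definition rmult :: "('a \<Rightarrow> 'a \<Rightarrow> 'a \<Rightarrow> nat) \<Rightarrow> ('a \<Rightarrow> nat) \<Rightarrow> 'a \<Rightarrow> ('a \<Rightarrow> nat)" where
  "rmult N r x = (\<lambda>a. \<Sum>b\<in>{b. r b \<noteq> 0}. r b * N a b x)"

definition wprod :: "('a \<Rightarrow> 'a \<Rightarrow> 'a \<Rightarrow> nat) \<Rightarrow> 'a \<Rightarrow> 'a list \<Rightarrow> ('a \<Rightarrow> nat)" where
  "wprod N e xs = foldl (rmult N) (\<lambda>a. if a = e then 1 else 0) xs"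

definition generating ::
  "('a \<Rightarrow> 'a \<Rightarrow> 'a \<Rightarrow> nat) \<Rightarrow> 'a \<Rightarrow> ('a \<Rightarrow> 'a) \<Rightarrow> 'a set \<Rightarrow> bool" where
  "generating N e bar X \<longleftrightarrow> finite X \<and> bar ` X = X \<and>
     (\<forall>a. \<exists>xs. xs \<noteq> [] \<and> set xs \<subseteq> X \<and> wprod N e xs a \<noteq> 0)"

definition wsize :: "('a \<Rightarrow> real) \<Rightarrow> 'a set \<Rightarrow> real" where
  "wsize d A = (\<Sum>a\<in>A. (d a)^2)"

definition inner_boundary ::
  "('a \<Rightarrow> 'a \<Rightarrow> 'a \<Rightarrow> nat) \<Rightarrow> 'a set \<Rightarrow> 'a set \<Rightarrow> 'a set" where
  "inner_boundary N X A = {a \<in> A. \<exists>x\<in>X. \<not> supp N a x \<subseteq> A}"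

definition boundary ::
  "('a \<Rightarrow> 'a \<Rightarrow> 'a \<Rightarrow> nat) \<Rightarrow> 'a set \<Rightarrow> 'a set \<Rightarrow> 'a set" where
  "boundary N X A = {a \<in> A. \<exists>x\<in>X. \<not> supp N a x \<subseteq> A}
                  \<union> {a \<in> - A. \<exists>x\<in>X. \<not> supp N a x \<subseteq> - A}"

definition Fol ::
  "('a \<Rightarrow> 'a \<Rightarrow> 'a \<Rightarrow> nat) \<Rightarrow> ('a \<Rightarrow> real) \<Rightarrow> 'a set \<Rightarrow> real" where
  "Fol N d X = Inf {wsize d (boundary N X A) / wsize d A | A. finite A \<and> A \<noteq> {}}"

definition Fol_inn ::
  "('a \<Rightarrow> 'a \<Rightarrow> 'a \<Rightarrow> nat) \<Rightarrow> ('a \<Rightarrow> real) \<Rightarrow> 'a set \<Rightarrow> real" where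
  "Fol_inn N d X = Inf {wsize d (inner_boundary N X A) / wsize d A | A. finite A \<and> A \<noteq> {}}"

end

theory Submission
  imports Defs
begin

lemma sum_UN_le_nonneg:
  fixes f :: "'a \<Rightarrow> real"
  assumes "finite I" "\<And>i. i \<in> I \<Longrightarrow> finite (F i)" "\<And>x. f x \<ge> 0"
  shows "sum f (\<Union>i\<in>I. F i) \<le> (\<Sum>i\<in>I. sum f (F i))"
  using assms
proof (induction I rule: finite_induct)
  case empty
  then show ?case by simp
next
  case (insert j I)
  have fin: "finite (\<Union>i\<in>I. F i)" using insert by auto
  have "sum f (\<Union>i\<in>insert j I. F i) = sum f (F j \<union> (\<Union>i\<in>I. F i))" by simp
  also have "\<dots> \<le> sum f (F j) + sum f (\<Union>i\<in>I. F i)"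
  proof -
    have "sum f (F j \<union> (\<Union>i\<in>I. F i)) + sum f (F j \<inter> (\<Union>i\<in>I. F i))
          = sum f (F j) + sum f (\<Union>i\<in>I. F i)"
      using sum.union_inter[of "F j" "\<Union>i\<in>I. F i" f] insert fin by auto
    moreover have "sum f (F j \<inter> (\<Union>i\<in>I. F i)) \<ge> 0" using insert(5) by (simp add: sum_nonneg)
    ultimately show ?thesis by linarith
  qed
  also have "\<dots> \<le> sum f (F j) + (\<Sum>i\<in>I. sum f (F i))" using insert by auto
  also have "\<dots> = (\<Sum>i\<in>insert j I. sum f (F i))" using insert by simp
  finally show ?case .
qed

lemma supp_wsize:
  assumes fa: "fusion_algebra N e bar d"
  shows "finite (supp N b y) \<and> wsize d (supp N b y) \<le> (d b)^2 * (d y)^2"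
proof -
  let ?S = "supp N b y"
  have fin: "finite ?S" using fa unfolding fusion_algebra_def by blast
  have dpos: "\<And>a. d a \<ge> 1" using fa unfolding fusion_algebra_def by blast
  have eq: "(\<Sum>a\<in>?S. real (N a b y) * d a) = d b * d y" using fa unfolding fusion_algebra_def by blast
  have "(\<Sum>a\<in>?S. d a) \<le> (\<Sum>a\<in>?S. real (N a b y) * d a)"
  proof (rule sum_mono)
    fix a assume "a \<in> ?S"
    then have "N a b y \<ge> 1" unfolding supp_def by auto
    then have "real (N a b y) \<ge> 1" by simp
    moreover have "d a \<ge> 0" using dpos[of a] by simp
    ultimately show "d a \<le> real (N a b y) * d a"
      by (metis mult_le_cancel_right1 not_le order_less_le_trans zero_less_one)
  qed
  then have s: "(\<Sum>a\<in>?S. d a) \<le> d b * d y" using eq by simp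
  have "(\<Sum>a\<in>?S. (d a)^2) \<le> (\<Sum>a\<in>?S. d a * (\<Sum>a\<in>?S. d a))"
  proof (rule sum_mono)
    fix a assume "a \<in> ?S"
    have "d a \<le> (\<Sum>a\<in>?S. d a)"
      using member_le_sum[of a ?S d] \<open>a \<in> ?S\<close> fin dpos by (meson dual_order.trans zero_le_one)
    then show "(d a)^2 \<le> d a * (\<Sum>a\<in>?S. d a)"
      using dpos[of a] by (simp add: power2_eq_square)
  qed
  also have "\<dots> = (\<Sum>a\<in>?S. d a) * (\<Sum>a\<in>?S. d a)" by (simp add: sum_distrib_right)
  also have "\<dots> \<le> (d b * d y) * (d b * d y)"
    using s by (meson dpos mult_mono order_trans sum_nonneg zero_le_one)
  finally show ?thesis using fin unfolding wsize_def by (simp add: power2_eq_square algebra_simps)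
qed

lemma main_bound:
  assumes fa: "fusion_algebra N e bar d"
    and fX: "finite X" and bX: "bar ` X = X" and fA: "finite A"
  shows "wsize d (boundary N X A) \<le> (1 + wsize d X) * wsize d (inner_boundary N X A)"
proof -
  let ?In = "inner_boundary N X A"
  let ?Out = "{a \<in> - A. \<exists>x\<in>X. \<not> supp N a x \<subseteq> - A}"
  let ?U = "\<Union>b\<in>?In. \<Union>y\<in>X. supp N b y"
  have frob: "\<And>a x y. N a x y = N x a (bar y)" using fa unfolding fusion_algebra_def by blast
  have dpos: "\<And>a. d a \<ge> 1" using fa unfolding fusion_algebra_def by blast
  have finIn: "finite ?In" using fA unfolding inner_boundary_def by auto
  have finS: "\<And>b y. finite (supp N b y)" using supp_wsize[OF fa] by blast
  have sub: "?Out \<subseteq> ?U"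
  proof
    fix a assume "a \<in> ?Out"
    then obtain x b where a: "a \<notin> A" "x \<in> X" "b \<in> supp N a x" "b \<in> A" by auto
    have "N a b (bar x) \<noteq> 0" using a(3) frob[of b a x] unfolding supp_def by simp
    then have as: "a \<in> supp N b (bar x)" unfolding supp_def by simp
    have bx: "bar x \<in> X" using a(2) bX by blast
    have "b \<in> ?In" unfolding inner_boundary_def using a as bx by blast
    then show "a \<in> ?U" using as bx by blast
  qed
  have finU: "finite ?U" using finIn fX finS by blast
  have finOut: "finite ?Out" using finite_subset[OF sub finU] .
  have bd: "boundary N X A = ?In \<union> ?Out" unfolding boundary_def inner_boundary_def by simp
  have disj: "?In \<inter> ?Out = {}" unfolding inner_boundary_def by auto
  have "wsize d (boundary N X A) = wsize d ?In + wsize d ?Out"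
    unfolding bd wsize_def using sum.union_disjoint[OF finIn finOut disj] by simp
  also have "wsize d ?Out \<le> wsize d ?U"
    unfolding wsize_def by (rule sum_mono2[OF finU sub]) simp
  also have "wsize d ?U \<le> (\<Sum>b\<in>?In. wsize d (\<Union>y\<in>X. supp N b y))"
    unfolding wsize_def by (rule sum_UN_le_nonneg) (use finIn fX finS in auto)
  also have "\<dots> \<le> (\<Sum>b\<in>?In. \<Sum>y\<in>X. wsize d (supp N b y))"
    unfolding wsize_def by (rule sum_mono, rule sum_UN_le_nonneg) (use fX finS in auto)
  also have "\<dots> \<le> (\<Sum>b\<in>?In. \<Sum>y\<in>X. (d b)^2 * (d y)^2)"
    by (intro sum_mono) (use supp_wsize[OF fa] in blast)
  also have "\<dots> = wsize d ?In * wsize d X"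
    unfolding wsize_def by (simp add: sum_distrib_left sum_distrib_right sum.swap[of _ X])
  finally show ?thesis by (simp add: algebra_simps)
qed

lemma wsize_nonneg: "wsize d A \<ge> 0"
  unfolding wsize_def by (simp add: sum_nonneg)

theorem proposition3p3:
  fixes N :: "'a \<Rightarrow> 'a \<Rightarrow> 'a \<Rightarrow> nat" and e :: 'a and bar :: "'a \<Rightarrow> 'a"
    and d :: "'a \<Rightarrow> real" and X :: "'a set"
  assumes "fusion_algebra N e bar d"
    and "finite X" and "bar ` X = X" and "X \<noteq> {}"
  shows "\<exists>C>0. (\<forall>A. finite A \<longrightarrow>
              wsize d (boundary N X A) \<le> C * wsize d (inner_boundary N X A))
           \<and> (generating N e bar X \<longrightarrow> Fol N d X \<le> C * Fol_inn N d X)"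
proof -
  define C where "C = 1 + wsize d X"
  have Cpos: "C > 0" unfolding C_def using wsize_nonneg[of d X] by linarith
  have b: "\<And>A. finite A \<Longrightarrow> wsize d (boundary N X A) \<le> C * wsize d (inner_boundary N X A)"
    unfolding C_def using main_bound[OF assms(1-3)] by blast
  have dpos: "\<And>a. d a \<ge> 1" using assms(1) unfolding fusion_algebra_def by blast
  let ?S = "{wsize d (boundary N X A) / wsize d A | A. finite A \<and> A \<noteq> {}}"
  let ?T = "{wsize d (inner_boundary N X A) / wsize d A | A. finite A \<and> A \<noteq> {}}"
  have Tne: "?T \<noteq> {}" by blast
  have Sbdd: "bdd_below ?S"
    by (rule bdd_belowI[of _ 0]) (auto intro!: divide_nonneg_nonneg wsize_nonneg)
  have "Inf ?S / C \<le> Inf ?T"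
  proof (rule cInf_greatest[OF Tne])
    fix t assume "t \<in> ?T"
    then obtain A where A: "finite A" "A \<noteq> {}" "t = wsize d (inner_boundary N X A) / wsize d A" by blast
    have wA: "wsize d A > 0"
    proof -
      obtain a where "a \<in> A" using A by blast
      have "(d a)^2 \<le> wsize d A" unfolding wsize_def
        using member_le_sum[of a A "\<lambda>a. (d a)^2"] \<open>a \<in> A\<close> A(1) by simp
      moreover have "(d a)^2 > 0" using dpos[of a] by simp
      ultimately show ?thesis by linarith
    qed
    have "Inf ?S \<le> wsize d (boundary N X A) / wsize d A"
      by (rule cInf_lower[OF _ Sbdd]) (use A in blast)
    also have "\<dots> \<le> C * wsize d (inner_boundary N X A) / wsize d A"
      using b[OF A(1)] wA by (simp add: divide_right_mono)
    finally show "Inf ?S / C \<le> t" using Cpos A(3) by (simp add: pos_divide_le_eq mult.commute)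
  qed
  then have "Inf ?S \<le> C * Inf ?T" using Cpos by (simp add: pos_divide_le_eq mult.commute)
  then have "Fol N d X \<le> C * Fol_inn N d X" unfolding Fol_def Fol_inn_def .
  then show ?thesis using Cpos b by blast
qed

end
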